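(* Let $r\geq 1$ be odd and $m\geq 3$. For every integer $j$ with $1\leq j\leq \frac{2^{rm}-1}{2^{m}-1}-1$, we have $\mathrm{wt}_{rm}((2^m-1)j)\leq rm-m$.
   Context: For an integer $0\le i\le 2^k-1$, $\mathrm{wt}_k(i)$ denotes the number of $1$'s in the binary expansion of $i$. (Here $(2^m-1)j<2^{rm}-1$.) *)

theory Defs
  imports Main
begin

definition wt :: "nat \<Rightarrow> nat \<Rightarrow> nat" where
  "wt k i = card {b. b < k \<and> bit i b}"

end

theory Submission imports Defs begin

function pc :: "nat \<Rightarrow> nat" where
  "pc n = (if n = 0 then 0 else n mod 2 + pc (n div 2))"
  by auto
termination by (relation "measure id") auto
declare pc.simps[simp del]
lemma pc0[simp]: "pc 0 = 0" by (subst pc.simps) simp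
lemma pc_rec: "n > 0 \<Longrightarrow> pc n = n mod 2 + pc (n div 2)" by (subst pc.simps) simp
lemma pc1[simp]: "pc (Suc 0) = 1" by (subst pc_rec) auto

lemma pc_sub: "pc (a + b) \<le> pc a + pc b"
proof (induction "a+b" arbitrary: a b rule: less_induct)
  case less
  show ?case
  proof (cases "a = 0 \<or> b = 0")
    case True then show ?thesis by (auto simp: pc.simps[of 0])
  next
    case False
    then have ab: "a > 0" "b > 0" by auto
    have pa: "pc a = a mod 2 + pc (a div 2)" using ab by (simp add: pc.simps[of a])
    have pb: "pc b = b mod 2 + pc (b div 2)" using ab by (simp add: pc.simps[of b])
    have pab: "pc (a+b) = (a+b) mod 2 + pc ((a+b) div 2)" using ab by (simp add: pc.simps[of "a+b"])
    show ?thesis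
    proof (cases "a mod 2 = 1 \<and> b mod 2 = 1")
      case True
      have d: "(a+b) div 2 = a div 2 + (b div 2 + 1)" "(a+b) mod 2 = 0" using True by presburger+
      have 1: "pc (a div 2 + (b div 2 + 1)) \<le> pc (a div 2) + pc (b div 2 + 1)"
        by (rule less) (use True ab in presburger)
      have 2: "pc (b div 2 + 1) \<le> pc (b div 2) + pc 1"
        by (rule less) (use True ab in presburger)
      show ?thesis using 1 2 d pa pb pab True by simp
    next
      case False
      have d: "(a+b) div 2 = a div 2 + b div 2" "(a+b) mod 2 = a mod 2 + b mod 2" using False by presburger+
      have 1: "pc (a div 2 + b div 2) \<le> pc (a div 2) + pc (b div 2)"
        by (rule less) (use ab in presburger)
      then show ?thesis using 1 d pa pb pab by simp
    qed
  qed
qed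

lemma pc_shift: "s < 2^m \<Longrightarrow> pc (q * 2^m + s) = pc q + pc s"
proof (induction m arbitrary: q s)
  case 0 then show ?case by (simp add: pc.simps[of 0])
next
  case (Suc m)
  show ?case
  proof (cases "q * 2 ^ Suc m + s = 0")
    case True then show ?thesis by (simp add: pc.simps[of 0])
  next
    case False
    have e1: "(q * 2 ^ Suc m + s) div 2 = q * 2^m + s div 2" by simp
    have e2: "(q * 2 ^ Suc m + s) mod 2 = s mod 2"
    proof -
      have "q * 2 ^ Suc m + s = s + 2 * (q * 2^m)" by simp
      then show ?thesis by (metis mod_mult_self2 mult.commute)
    qed
    have sl: "s div 2 < 2^m" using Suc.prems by simp
    have "pc (q * 2 ^ Suc m + s) = (q * 2 ^ Suc m + s) mod 2 + pc ((q * 2 ^ Suc m + s) div 2)"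
      by (rule pc_rec) (use False in simp)
    then have "pc (q * 2 ^ Suc m + s) = s mod 2 + pc (q * 2^m + s div 2)"
      unfolding e1 e2 .
    also have "\<dots> = s mod 2 + pc q + pc (s div 2)" using Suc.IH[OF sl] by simp
    also have "s mod 2 + pc (s div 2) = pc s"
      by (cases "s = 0") (auto simp: pc.simps[of s] pc.simps[of 0])
    ultimately show ?thesis by simp
  qed
qed

lemma pc_mask: "pc (2^m - 1) = m"
proof (induction m)
  case 0 then show ?case by (simp add: pc.simps[of 0])
next
  case (Suc m)
  have "(2::nat)^Suc m - 1 = (2^m - 1) * 2 + 1" by (induction m) auto
  moreover have "pc ((2^m - 1) * 2 + 1) = 1 + pc (2^m - 1)"
    by (subst pc_rec) (simp_all, presburger)
  ultimately have "pc (2^Suc m - 1) = 1 + pc (2^m - 1)" by simp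
  then show ?case using Suc by simp
qed

lemma pc_mult: assumes "m \<ge> 1" "y > 0" "(2^m - 1) dvd y" shows "pc y \<ge> m"
  using assms(2,3)
proof (induction y rule: less_induct)
  case (less y)
  show ?case
  proof (cases "y < 2^m")
    case True
    obtain c where c: "y = (2^m-1) * c" using less.prems by blast
    have "c \<noteq> 0" using c less.prems by auto
    moreover have "c < 2"
    proof (rule ccontr)
      assume "\<not> c < 2"
      then have "y \<ge> (2^m-1)*2" using c by simp
      moreover have "(2::nat)^m \<ge> 2" using assms(1) by (metis power_increasing power_one_right nat_le_linear not_less_eq_eq numeral_le_one_iff one_le_numeral semiring_norm(69))
      ultimately show False using True by linarith
    qed
    ultimately have "c = 1" by linarith
    then show ?thesis using c pc_mask by simp
  next
    case False
    define q s where "q = y div 2^m" and "s = y mod 2^m"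
    have y: "y = q * 2^m + s" using div_mult_mod_eq[of y "2^m"] by (simp add: q_def s_def)
    have q1: "q \<ge> 1" using False unfolding q_def by (simp add: div_greater_zero_iff Suc_le_eq)
    have sl: "s < 2^m" by (simp add: s_def)
    have M: "(2::nat)^m = (2^m - 1) + 1" by simp
    have y2: "y = q * (2^m - 1) + (q + s)" using y M by (metis add.assoc mult.right_neutral distrib_left)
    have lt: "q + s < y"
    proof -
      have "(2::nat)^m \<ge> 2^1" using assms(1) by (rule power_increasing) simp
      then have "2^m - 1 \<ge> (1::nat)" by simp
      then have "q * (2^m-1) \<ge> 1" using q1 mult_le_mono[of 1 q 1 "2^m-1"] by simp
      then show ?thesis using y2 by linarith
    qed
    have dv: "(2^m - 1) dvd (q + s)" using y2 less.prems(2) by (metis dvd_add_right_iff dvd_triv_right)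
    have "m \<le> pc (q + s)" using less.IH[OF lt] q1 dv by simp
    also have "\<dots> \<le> pc q + pc s" by (rule pc_sub)
    also have "\<dots> = pc y" using pc_shift[OF sl] y by simp
    finally show ?thesis .
  qed
qed

lemma wt_Suc: "wt (Suc k) i = i mod 2 + wt k (i div 2)"
proof -
  have "{b. b < Suc k \<and> bit i b} = (if odd i then {0} else {}) \<union> Suc ` {b. b < k \<and> bit (i div 2) b}"
    by (auto simp: bit_Suc bit_0 image_iff less_Suc_eq_0_disj)
  then show ?thesis unfolding wt_def
    by (simp add: card_image odd_iff_mod_2_eq_one[symmetric] card_insert_if odd_iff_mod_2_eq_one image_iff)
qed

lemma wt_pc: "i < 2^k \<Longrightarrow> wt k i = pc i"
proof (induction k arbitrary: i)
  case 0 then show ?case by (simp add: wt_def)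
next
  case (Suc k)
  have "i div 2 < 2^k" using Suc.prems by simp
  then show ?case using Suc.IH wt_Suc[of k i]
    by (cases "i = 0") (auto simp: pc_rec[of i])
qed

lemma arith_aux: "(P::nat) \<ge> 1 \<Longrightarrow> i < 2*P \<Longrightarrow> (2*P - 1 - i) mod 2 = 1 - i mod 2 \<and> (2*P - 1 - i) div 2 = P - 1 - i div 2"
proof -
  assume a: "P \<ge> 1" "i < 2*P"
  obtain a b where i: "i = 2*a + b" "b < 2" using div_mult_mod_eq[of i 2] mod_less_divisor[of 2 i] by (metis mult.commute zero_less_numeral)
  have ab: "a < P" using a i by linarith
  have "2*P - 1 - i = 2*(P - 1 - a) + (1 - b)" using a i ab by (cases b) auto
  moreover have "i mod 2 = b" "i div 2 = a" using i by auto
  ultimately show ?thesis using i(2) by (cases b) auto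
qed

lemma pc_compl: "i < 2^k \<Longrightarrow> pc i + pc (2^k - 1 - i) = k"
proof (induction k arbitrary: i)
  case 0 then show ?case by simp
next
  case (Suc k)
  define P :: nat where "P = 2^k"
  have P: "P \<ge> 1" "i < 2*P" using Suc.prems by (auto simp: P_def)
  have j: "(2*P - 1 - i) mod 2 = 1 - i mod 2" "(2*P - 1 - i) div 2 = P - 1 - i div 2"
    using arith_aux[OF P] by auto
  have id: "i div 2 < P" using P by simp
  have "pc i = i mod 2 + pc (i div 2)" by (cases "i = 0") (auto simp: pc_rec[of i])
  moreover have "pc (2*P - 1 - i) = (2*P - 1 - i) mod 2 + pc ((2*P - 1 - i) div 2)"
  proof (cases "2*P - 1 - i = 0")
    case False then show ?thesis by (intro pc_rec) simp
  qed simp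
  ultimately have "pc i + pc (2*P - 1 - i) = i mod 2 + (1 - i mod 2) + (pc (i div 2) + pc (P - 1 - i div 2))"
    using j by simp
  also have "\<dots> = Suc k" using Suc.IH[of "i div 2"] id unfolding P_def by simp
  finally show ?case by (simp add: P_def)
qed

lemma mask_dvd: "(2^m - 1 :: nat) dvd (2^(r*m) - 1)"
proof (induction r)
  case 0 then show ?case by simp
next
  case (Suc r)
  have "(2::nat)^(Suc r * m) - 1 = 2^m * (2^(r*m) - 1) + (2^m - 1)"
  proof -
    have a: "(2::nat)^(r*m) \<ge> 1" "(2::nat)^m \<ge> 1" by simp_all
    have "(2::nat)^(Suc r * m) = 2^m * 2^(r*m)" by (simp add: power_add)
    then show ?thesis using a by (simp add: diff_mult_distrib2)
  qed
  moreover have "(2::nat)^m - 1 dvd 2^m * (2^(r*m) - 1) + (2^m - 1)"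
    by (intro dvd_add dvd_mult Suc.IH dvd_refl)
  ultimately show ?case by metis
qed

theorem lemma4:
  fixes r m j :: nat
  assumes "r \<ge> 1" and "odd r" and "m \<ge> 3"
    and "1 \<le> j" and "j \<le> (2 ^ (r * m) - 1) div (2 ^ m - 1) - 1"
  shows "wt (r * m) ((2 ^ m - 1) * j) \<le> r * m - m"
proof -
  define M :: nat where "M = 2^m - 1"
  define N :: nat where "N = 2^(r*m) - 1"
  define Q where "Q = N div M"
  have NQ: "N = M * Q" unfolding Q_def M_def N_def using mask_dvd[of m r] by simp
  have jQ: "j < Q" "1 \<le> j" using assms(4,5) unfolding Q_def M_def N_def by auto
  define x where "x = M * j"
  define y where "y = M * (Q - j)"
  have xy: "x + y = N" unfolding x_def y_def NQ using jQ
    by (metis add_diff_inverse_nat distrib_left less_imp_le_nat not_less)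
  have "N < 2^(r*m)" unfolding N_def by simp
  then have xl: "x < 2^(r*m)" using xy by linarith
  have ye: "y = 2^(r*m) - 1 - x" using xy unfolding N_def by simp
  have "(2::nat)^m \<ge> 2^1" using assms(3) by (intro power_increasing) simp_all
  then have M1: "M \<ge> 1" unfolding M_def by simp
  have ypos: "y > 0" unfolding y_def using jQ M1 by simp
  have "pc y \<ge> m" using pc_mult[of m y] assms(3) ypos unfolding y_def M_def by simp
  moreover have "pc x + pc y = r*m" using pc_compl[OF xl] ye by simp
  ultimately have "pc x \<le> r*m - m" by simp
  then show ?thesis using wt_pc[OF xl] unfolding x_def M_def by simp
qed

end
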